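(* Let $G$ be a graph on $n$ vertices with maximum degree at most $\Delta_{\max}$, let $t\in\mathbb{N}$, let $0<\varepsilon\leq\frac12$, and let $\eta$ satisfy $1\leq \eta\leq \frac{\varepsilon^2}{128\log n}\cdot\frac{\Delta_{\max}}{t}$. Let $c:E(G)\to[t]$ be a (not necessarily proper) edge-colouring such that for every edge $uv\in E(G)$ and every $i\in[t]$, $$s_{c(uv)}(u)+s_{c(uv)}(v)\leq \eta+s_i(u)+s_i(v).$$ Then $\tilde{d}\leq (1+\varepsilon)\frac{\Delta_{\max}}{t}$.
   Context: For a vertex $v$ and colour $i\in[t]$, $d_i(v)$ is the number of edges of colour $i$ incident to $v$, and $s_i(v)=\max\{d_i(v)-\frac{\Delta_{\max}}{t},0\}$ is the surplus of colour $i$ at $v$. $\tilde{d}=\max_{i\in[t]}\max_{v\in V(G)} d_i(v)$. *)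

theory Defs
  imports Complex_Main
begin

definition simple_graph :: "'a set \<Rightarrow> 'a set set \<Rightarrow> bool" where
  "simple_graph V E \<longleftrightarrow> finite V \<and> (\<forall>e\<in>E. e \<subseteq> V \<and> card e = 2)"

definition degree :: "'a set set \<Rightarrow> 'a \<Rightarrow> nat" where
  "degree E v = card {e\<in>E. v \<in> e}"

definition col_deg :: "'a set set \<Rightarrow> ('a set \<Rightarrow> nat) \<Rightarrow> nat \<Rightarrow> 'a \<Rightarrow> nat" where
  "col_deg E c i v = card {e\<in>E. v \<in> e \<and> c e = i}"

definition surplus :: "'a set set \<Rightarrow> ('a set \<Rightarrow> nat) \<Rightarrow> real \<Rightarrow> nat \<Rightarrow> nat \<Rightarrow> 'a \<Rightarrow> real" where
  "surplus E c \<Delta> t i v = max (real (col_deg E c i v) - \<Delta> / real t) 0"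

definition dtilde :: "'a set \<Rightarrow> 'a set set \<Rightarrow> ('a set \<Rightarrow> nat) \<Rightarrow> nat \<Rightarrow> nat" where
  "dtilde V E c t = Max ({col_deg E c i v | i v. i \<in> {1..t} \<and> v \<in> V} \<union> {0})"

end

theory Submission
  imports Defs
begin

lemma two_elem:
  assumes "card e = 2" "w \<in> e"
  shows "\<exists>u. u \<noteq> w \<and> e = {w, u} \<and> the_elem (e - {w}) = u"
proof -
  obtain x y where e: "e = {x, y}" "x \<noteq> y" using card_2_iff[THEN iffD1, OF assms(1)] by blast
  show ?thesis
  proof (cases "w = x")
    case True
    have d: "e - {w} = {y}" using e True by auto
    have "y \<noteq> w" "e = {w, y}" using e True by auto
    then show ?thesis using d by auto
  next
    case False
    then have w: "w = y" using e assms(2) by auto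
    have d: "e - {w} = {x}" using e w by auto
    have "x \<noteq> w" "e = {w, x}" using e w by auto
    then show ?thesis using d by auto
  qed
qed

lemma step:
  fixes V :: "'a set" and E :: "'a set set" and c :: "'a set \<Rightarrow> nat"
    and t :: nat and \<Delta> \<eta> \<sigma> l :: real and p q :: nat
  assumes G: "simple_graph V E"
    and balanced: "\<forall>u v. {u, v} \<in> E \<longrightarrow> (\<forall>i\<in>{1..t}.
        surplus E c \<Delta> t (c {u, v}) u + surplus E c \<Delta> t (c {u, v}) v
          \<le> \<eta> + surplus E c \<Delta> t i u + surplus E c \<Delta> t i v)"
    and sig: "\<forall>r\<in>{1..t}. \<forall>v\<in>V. surplus E c \<Delta> t r v \<le> \<sigma>"
    and p: "p \<in> {1..t}" and q: "q \<in> {1..t}" and l: "l > 0"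
  shows "real (card {v\<in>V. surplus E c \<Delta> t p v - surplus E c \<Delta> t q v \<ge> l}) * (\<Delta> / real t + l)
     \<le> real (card {v\<in>V. surplus E c \<Delta> t q v - surplus E c \<Delta> t p v \<ge> l - \<eta>}) * (\<Delta> / real t + \<sigma> - l + \<eta>)"
proof -
  define s where "s = surplus E c \<Delta> t"
  define D where "D = \<Delta> / real t"
  define X where "X = {v\<in>V. s p v - s q v \<ge> l}"
  define Y where "Y = {v\<in>V. s q v - s p v \<ge> l - \<eta>}"
  define A where "A = (\<lambda>w. {e\<in>E. w \<in> e \<and> c e = p})"
  have finV: "finite V" and EV: "\<forall>e\<in>E. e \<subseteq> V \<and> card e = 2" using G by (auto simp: simple_graph_def)
  have finE: "finite E" using finV EV by (meson Pow_iff finite_Pow_iff finite_subset subsetI)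
  have finA: "finite (A w)" for w using finE unfolding A_def by auto
  have finX: "finite X" and finY: "finite Y" using finV unfolding X_def Y_def by auto
  have s_nonneg: "s r v \<ge> 0" for r v unfolding s_def surplus_def by simp
  have s_ge: "real (col_deg E c r v) \<le> D + s r v" for r v unfolding s_def surplus_def D_def by simp
  have cA: "col_deg E c p w = card (A w)" for w unfolding col_deg_def A_def by simp
  have "real (card X) * (D + l) = (\<Sum>w\<in>X. D + l)" by simp
  also have "\<dots> \<le> (\<Sum>w\<in>X. real (card (A w)))"
  proof (rule sum_mono)
    fix w assume "w \<in> X"
    then have "s p w \<ge> l" using s_nonneg[of q w] unfolding X_def by auto
    then have "real (col_deg E c p w) - D \<ge> l" using l unfolding s_def surplus_def D_def
      by (auto simp: max_def split: if_splits)
    then show "D + l \<le> real (card (A w))" using cA by simp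
  qed
  also have "\<dots> = real (card (Sigma X A))" using finX finA by simp
  also have "\<dots> \<le> real (card (Sigma Y A))"
  proof -
    define h where "h = (\<lambda>(w::'a, e::'a set). (the_elem (e - {w}), e))"
    have "inj_on h (Sigma X A)"
    proof (rule inj_onI)
      fix x y assume x: "x \<in> Sigma X A" and y: "y \<in> Sigma X A" and hxy: "h x = h y"
      obtain w e where xe: "x = (w, e)" by (cases x)
      obtain w' e' where ye: "y = (w', e')" by (cases y)
      have ee: "e' = e" using hxy xe ye unfolding h_def by simp
      have eE: "e \<in> E" "w \<in> e" "w' \<in> e" using x y xe ye ee unfolding A_def by auto
      then have c2: "card e = 2" using EV by blast
      obtain u where u: "u \<noteq> w" "e = {w, u}" "the_elem (e - {w}) = u"
        using two_elem[OF c2 eE(2)] by blast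
      obtain u' where u': "u' \<noteq> w'" "e = {w', u'}" "the_elem (e - {w'}) = u'"
        using two_elem[OF c2 eE(3)] by blast
      have "u = u'" using hxy xe ye ee u u' unfolding h_def by simp
      then have "w = w'" using u u' by (auto simp: doubleton_eq_iff)
      then show "x = y" using xe ye ee by simp
    qed
    moreover have "h ` Sigma X A \<subseteq> Sigma Y A"
    proof
      fix y assume "y \<in> h ` Sigma X A"
      then obtain w e where we: "w \<in> X" "e \<in> A w" and y: "y = h (w, e)" by auto
      have eE: "e \<in> E" "w \<in> e" "c e = p" using we unfolding A_def by auto
      then have c2: "card e = 2" using EV by blast
      obtain u where u: "u \<noteq> w" "e = {w, u}" "the_elem (e - {w}) = u"
        using two_elem[OF c2 eE(2)] by blast
      have uV: "u \<in> V" using EV eE u by auto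
      have b: "{w, u} \<in> E" using eE u by simp
      have "s (c {w, u}) w + s (c {w, u}) u \<le> \<eta> + s q w + s q u"
        using balanced[rule_format, OF b q] unfolding s_def by simp
      then have "s p w + s p u \<le> \<eta> + s q w + s q u" using eE u by simp
      moreover have "s p w - s q w \<ge> l" using we unfolding X_def by auto
      ultimately have "u \<in> Y" using uV unfolding Y_def by auto
      moreover have "e \<in> A u" using eE u unfolding A_def by auto
      ultimately show "y \<in> Sigma Y A" using y u unfolding h_def by auto
    qed
    moreover have "finite (Sigma Y A)" using finY finA by auto
    ultimately show ?thesis by (simp add: card_inj_on_le)
  qed
  also have "\<dots> = (\<Sum>u\<in>Y. real (card (A u)))" using finY finA by simp
  also have "\<dots> \<le> (\<Sum>u\<in>Y. D + \<sigma> - l + \<eta>)"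
  proof (rule sum_mono)
    fix u assume "u \<in> Y"
    then have "u \<in> V" "s p u \<le> s q u - l + \<eta>" unfolding Y_def by auto
    moreover have "s q u \<le> \<sigma>" using sig q \<open>u \<in> V\<close> unfolding s_def by auto
    ultimately show "real (card (A u)) \<le> D + \<sigma> - l + \<eta>" using s_ge[of p u] cA by simp
  qed
  also have "\<dots> = real (card Y) * (D + \<sigma> - l + \<eta>)" by simp
  finally show ?thesis unfolding X_def Y_def D_def s_def .
qed


lemma key_ineq:
  fixes D \<sigma> l \<eta> \<epsilon> :: real
  assumes "D > 0" "\<sigma> > \<epsilon> * D" "0 < \<epsilon>" "\<epsilon> \<le> 1/2" "\<eta> \<ge> 0" "l \<ge> 3/4 * \<sigma> + \<eta>"
  shows "(1 + \<epsilon>/4) * (D + \<sigma> - l + \<eta>) \<le> D + l"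
proof -
  define x where "x = \<epsilon>/4"
  have x: "0 < x" "x \<le> 1/8" using assms unfolding x_def by auto
  have s4: "\<sigma> \<ge> 4 * x * D" using assms unfolding x_def by simp
  have e1: "D + l - (1 + x) * (D + \<sigma> - l + \<eta>) = (2 + x) * l - x * D - (1 + x) * (\<sigma> + \<eta>)"
    by (simp add: algebra_simps)
  have "(2 + x) * l \<ge> (2 + x) * (3/4 * \<sigma> + \<eta>)" using assms(6) x by (intro mult_left_mono) auto
  moreover have "(2 + x) * (3/4 * \<sigma> + \<eta>) - x * D - (1 + x) * (\<sigma> + \<eta>) = \<sigma> * (1/2 - x/4) - x * D + \<eta>"
    by (simp add: algebra_simps)
  moreover have "\<sigma> * (1/2 - x/4) \<ge> (4 * x * D) * (1/2 - x/4)" using s4 x by (intro mult_right_mono) auto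
  moreover have "(4 * x * D) * (1/2 - x/4) \<ge> x * D"
  proof -
    have "(4 * x * D) * (1/2 - x/4) = x * D * (2 - x)" by (simp add: algebra_simps)
    moreover have "x * D * (2 - x) \<ge> x * D * 1" using x assms(1) by (intro mult_left_mono) auto
    ultimately show ?thesis by linarith
  qed
  ultimately have "D + l - (1 + x) * (D + \<sigma> - l + \<eta>) \<ge> 0" using e1 assms(5) by linarith
  then show ?thesis unfolding x_def by simp
qed

lemma ln_lower:
  fixes \<epsilon> :: real assumes "0 < \<epsilon>" "\<epsilon> \<le> 1/2"
  shows "ln (1 + \<epsilon>/4) \<ge> \<epsilon>/5"
proof -
  have pos: "1 + \<epsilon>/4 > 0" using assms by simp
  have "ln (1 / (1 + \<epsilon>/4)) \<le> 1 / (1 + \<epsilon>/4) - 1" using pos by (intro ln_le_minus_one) simp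
  moreover have "ln (1 / (1 + \<epsilon>/4)) = - ln (1 + \<epsilon>/4)" using pos by (simp add: ln_div)
  moreover have "1 / (1 + \<epsilon>/4) - 1 = - (\<epsilon> / (4 + \<epsilon>))" using assms by (simp add: field_simps)
  moreover have "\<epsilon> / (4 + \<epsilon>) \<ge> \<epsilon> / 5" using assms by (intro divide_left_mono) auto
  ultimately show ?thesis by linarith
qed

lemma ln2_half: "ln (2::real) \<ge> 1/2"
proof -
  have "ln (1/2::real) \<le> 1/2 - 1" by (intro ln_le_minus_one) simp
  moreover have "ln (1/2::real) = - ln 2" by (simp add: ln_div)
  ultimately show ?thesis by linarith
qed


theorem theorem4p2:
  fixes V :: "'a set" and E :: "'a set set" and c :: "'a set \<Rightarrow> nat"
    and n t :: nat and \<Delta> \<epsilon> \<eta> :: real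
  assumes G: "simple_graph V E"
    and n: "card V = n"
    and maxdeg: "\<forall>v\<in>V. real (degree E v) \<le> \<Delta>"
    and eps: "0 < \<epsilon>" "\<epsilon> \<le> 1/2"
    and eta: "1 \<le> \<eta>" "\<eta> \<le> \<epsilon>\<^sup>2 / (128 * ln (real n)) * (\<Delta> / real t)"
    and col: "\<forall>e\<in>E. c e \<in> {1..t}"
    and balanced: "\<forall>u v. {u, v} \<in> E \<longrightarrow> (\<forall>i\<in>{1..t}.
        surplus E c \<Delta> t (c {u, v}) u + surplus E c \<Delta> t (c {u, v}) v
          \<le> \<eta> + surplus E c \<Delta> t i u + surplus E c \<Delta> t i v)"
  shows "real (dtilde V E c t) \<le> (1 + \<epsilon>) * (\<Delta> / real t)"
proof (rule ccontr)
  assume nc: "\<not> real (dtilde V E c t) \<le> (1 + \<epsilon>) * (\<Delta> / real t)"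
  define D where "D = \<Delta> / real t"
  define L where "L = ln (real n)"
  define s where "s = surplus E c \<Delta> t"
  have finV: "finite V" and EV: "\<forall>e\<in>E. e \<subseteq> V \<and> card e = 2" using G by (auto simp: simple_graph_def)
  have finE: "finite E" using finV EV by (meson Pow_iff finite_Pow_iff finite_subset subsetI)
  have L0: "L \<ge> 0"
  proof (cases "n = 0")
    case True then show ?thesis unfolding L_def by simp
  next
    case False then show ?thesis unfolding L_def by simp
  qed
  have Lpos: "L > 0"
  proof (rule ccontr)
    assume "\<not> L > 0" then have "L = 0" using L0 by simp
    then have "\<eta> \<le> 0" using eta(2) unfolding L_def by simp
    then show False using eta(1) by simp
  qed
  have n2: "n \<ge> 2"
  proof (rule ccontr)
    assume "\<not> n \<ge> 2" then have "n = 0 \<or> n = 1" by auto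
    then show False using Lpos unfolding L_def by auto
  qed
  have Dpos: "D > 0"
  proof (rule ccontr)
    assume "\<not> D > 0"
    moreover have "\<epsilon>\<^sup>2 / (128 * L) \<ge> 0" using Lpos by simp
    ultimately have "\<epsilon>\<^sup>2 / (128 * L) * D \<le> 0" by (intro mult_nonneg_nonpos) auto
    then show False using eta unfolding L_def D_def by simp
  qed
  have tpos: "t > 0" using Dpos unfolding D_def by (cases "t = 0") auto
  have etaL: "\<eta> * (128 * L) \<le> \<epsilon>\<^sup>2 * D"
  proof -
    have "\<eta> \<le> \<epsilon>\<^sup>2 * D / (128 * L)" using eta(2) unfolding L_def D_def by (simp add: mult.commute)
    then show ?thesis using Lpos by (simp add: pos_le_divide_eq)
  qed
  define S where "S = {col_deg E c i v | i v. i \<in> {1..t} \<and> v \<in> V}"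
  have finS: "finite S"
  proof -
    have "S = (\<lambda>(i, v). col_deg E c i v) ` ({1..t} \<times> V)" unfolding S_def by fastforce
    then show ?thesis using finV by simp
  qed
  have "dtilde V E c t \<in> S \<union> {0}" unfolding dtilde_def S_def[symmetric] using finS by (intro Max_in) auto
  moreover have "dtilde V E c t \<noteq> 0" using nc Dpos eps unfolding D_def
    by (smt (verit) of_nat_0 mult_pos_pos)
  ultimately have "dtilde V E c t \<in> S" by simp
  then obtain i v where iv: "i \<in> {1..t}" "v \<in> V" "real (col_deg E c i v) > (1 + \<epsilon>) * D"
    using nc unfolding S_def D_def by auto
  define SS where "SS = {s i v | i v. i \<in> {1..t} \<and> v \<in> V}"
  have finSS: "finite SS"
  proof -
    have "SS = (\<lambda>(i, v). s i v) ` ({1..t} \<times> V)" unfolding SS_def by fastforce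
    then show ?thesis using finV by simp
  qed
  define \<sigma> where "\<sigma> = Max SS"
  have sig: "\<forall>r\<in>{1..t}. \<forall>v\<in>V. s r v \<le> \<sigma>"
  proof (intro ballI)
    fix r v assume "r \<in> {1..t}" "v \<in> V"
    then have "s r v \<in> SS" unfolding SS_def by blast
    then show "s r v \<le> \<sigma>" unfolding \<sigma>_def using finSS by (intro Max_ge)
  qed
  have "s i v \<ge> real (col_deg E c i v) - D" unfolding s_def surplus_def D_def by simp
  moreover have "s i v \<le> \<sigma>" using sig iv(1,2) by blast
  ultimately have sigbig: "\<sigma> > \<epsilon> * D" using iv(3) by (simp add: algebra_simps)
  have "\<sigma> \<in> SS" unfolding \<sigma>_def using finSS iv unfolding SS_def by (intro Max_in) auto
  then obtain a v0 where a: "a \<in> {1..t}" "v0 \<in> V" "s a v0 = \<sigma>" unfolding SS_def by auto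
  obtain b where b: "b \<in> {1..t}" "real (col_deg E c b v0) \<le> D"
  proof -
    have "\<exists>b\<in>{1..t}. real (col_deg E c b v0) \<le> D"
    proof (rule ccontr)
      assume "\<not> ?thesis"
      then have all: "\<forall>b\<in>{1..t}. real (col_deg E c b v0) > D" by auto
      have "(\<Sum>b\<in>{1..t}. D) < (\<Sum>b\<in>{1..t}. real (col_deg E c b v0))"
        using all tpos by (intro sum_strict_mono) auto
      moreover have "(\<Sum>b\<in>{1..t}. D) = \<Delta>" using tpos unfolding D_def by simp
      moreover have "(\<Sum>b\<in>{1..t}. col_deg E c b v0) = degree E v0"
      proof -
        have "(\<Sum>b\<in>{1..t}. col_deg E c b v0) = card (\<Union>b\<in>{1..t}. {e\<in>E. v0 \<in> e \<and> c e = b})"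
          unfolding col_deg_def using finE by (intro card_UN_disjoint[symmetric]) auto
        moreover have "(\<Union>b\<in>{1..t}. {e\<in>E. v0 \<in> e \<and> c e = b}) = {e\<in>E. v0 \<in> e}" using col by auto
        ultimately show ?thesis unfolding degree_def by simp
      qed
      ultimately have "real (degree E v0) > \<Delta>" by (metis of_nat_sum)
      then show False using maxdeg a(2) by auto
    qed
    then show ?thesis using that by blast
  qed
  have sb0: "s b v0 = 0" using b unfolding s_def surplus_def D_def by simp
  have sigpos: "\<sigma> > 0" using sigbig eps Dpos by (smt (verit) mult_pos_pos)
  define K where "K = nat \<lfloor>\<sigma> / (4 * \<eta>)\<rfloor>"
  have K1: "real K * (4 * \<eta>) \<le> \<sigma>"
  proof -
    have "real K \<le> \<sigma> / (4 * \<eta>)" unfolding K_def using sigpos eta(1)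
      by (simp add: of_nat_nat)
    then show ?thesis using eta(1) by (simp add: pos_le_divide_eq)
  qed
  have K2: "(real K + 1) * (4 * \<eta>) > \<sigma>"
  proof -
    have "real K + 1 > \<sigma> / (4 * \<eta>)" unfolding K_def using sigpos eta(1)
      by (simp add: of_nat_nat)
    then show ?thesis using eta(1) by (simp add: pos_divide_less_eq)
  qed
  define r where "r = 1 + \<epsilon>/4"
  have iter: "k \<le> K \<Longrightarrow> \<exists>p q. p \<in> {1..t} \<and> q \<in> {1..t} \<and>
      r ^ k \<le> real (card {v\<in>V. s p v - s q v \<ge> \<sigma> - real k * \<eta>})" for k
  proof (induction k)
    case 0
    have "v0 \<in> {v\<in>V. s a v - s b v \<ge> \<sigma> - real 0 * \<eta>}" using a sb0 by simp
    moreover have "finite {v\<in>V. s a v - s b v \<ge> \<sigma> - real 0 * \<eta>}" using finV by simp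
    ultimately have "card {v\<in>V. s a v - s b v \<ge> \<sigma> - real 0 * \<eta>} \<ge> 1"
      by (metis One_nat_def Suc_leI card_gt_0_iff empty_iff)
    then show ?case using a b by (intro exI[of _ a] exI[of _ b]) auto
  next
    case (Suc k)
    then obtain p q where pq: "p \<in> {1..t}" "q \<in> {1..t}"
      "r ^ k \<le> real (card {v\<in>V. s p v - s q v \<ge> \<sigma> - real k * \<eta>})" by auto
    define l where "l = \<sigma> - real k * \<eta>"
    have "real k + 1 \<le> real K" using Suc.prems by simp
    then have "(real k + 1) * (4 * \<eta>) \<le> \<sigma>" using K1 eta(1)
      by (smt (verit) mult_right_mono)
    then have lbig: "l \<ge> 3/4 * \<sigma> + \<eta>" unfolding l_def using eta(1) by (simp add: algebra_simps)
    have lpos: "l > 0" using lbig sigpos eta(1) by simp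
    define X where "X = real (card {v\<in>V. s p v - s q v \<ge> l})"
    define Y where "Y = real (card {v\<in>V. s q v - s p v \<ge> l - \<eta>})"
    define M where "M = D + \<sigma> - l + \<eta>"
    have "l \<le> \<sigma>" unfolding l_def using eta(1) by simp
    then have Mpos: "M > 0" unfolding M_def using Dpos eta(1) by simp
    have st: "X * (D + l) \<le> Y * M"
      using step[OF G balanced _ pq(1) pq(2) lpos, of \<sigma>] sig
      unfolding X_def Y_def M_def D_def s_def by simp
    have ki: "r * M \<le> D + l" unfolding r_def M_def
      using key_ineq[OF Dpos sigbig eps(1) eps(2) _ lbig] eta(1) by simp
    have X0: "X \<ge> 0" unfolding X_def by simp
    have "X * (r * M) \<le> X * (D + l)" using X0 ki by (intro mult_left_mono) auto
    then have "(X * r) * M \<le> Y * M" using st by (simp add: algebra_simps)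
    then have "X * r \<le> Y" using Mpos by simp
    moreover have "r ^ Suc k = r * r ^ k" by simp
    moreover have "r ^ k \<le> X" using pq(3) unfolding X_def l_def .
    moreover have "r \<ge> 0" unfolding r_def using eps by simp
    ultimately have "r ^ Suc k \<le> Y" by (smt (verit) mult_left_mono mult.commute)
    moreover have "l - \<eta> = \<sigma> - real (Suc k) * \<eta>" unfolding l_def by (simp add: algebra_simps)
    ultimately show ?case using pq unfolding Y_def by (intro exI[of _ q] exI[of _ p]) auto
  qed
  then obtain p q where "r ^ K \<le> real (card {v\<in>V. s p v - s q v \<ge> \<sigma> - real K * \<eta>})" by blast
  moreover have "card {v\<in>V. s p v - s q v \<ge> \<sigma> - real K * \<eta>} \<le> n"
    using n finV by (metis (no_types, lifting) card_mono mem_Collect_eq subsetI)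
  ultimately have rK: "r ^ K \<le> real n" by linarith
  have rpos: "r > 0" unfolding r_def using eps by simp
  have "ln (r ^ K) \<le> L" unfolding L_def using rK rpos by (intro ln_mono) auto
  then have "real K * ln r \<le> L" using rpos by (simp add: ln_realpow)
  moreover have "ln r \<ge> \<epsilon>/5" unfolding r_def using ln_lower eps by simp
  ultimately have A: "real K * (\<epsilon>/5) \<le> L" by (smt (verit) mult_left_mono of_nat_0_le_iff)
  have L2: "L \<ge> 1/2"
  proof -
    have "ln 2 \<le> L" unfolding L_def using n2 by simp
    then show ?thesis using ln2_half by simp
  qed
  have "(real K + 1) * (4 * \<eta>) * \<epsilon> > \<epsilon> * D * \<epsilon>"
    using K2 sigbig eps(1) by (smt (verit) mult_strict_right_mono)
  then have "(real K + 1) * \<epsilon> * (4 * \<eta>) > \<epsilon>\<^sup>2 * D" by (simp add: algebra_simps power2_eq_square)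
  then have "(real K + 1) * \<epsilon> * (4 * \<eta>) > \<eta> * (128 * L)" using etaL by linarith
  then have h32: "(real K + 1) * \<epsilon> * (4 * \<eta>) > (32 * L) * (4 * \<eta>)" by (simp add: algebra_simps)
  have "(real K + 1) * \<epsilon> > 32 * L" by (rule mult_right_less_imp_less[OF h32]) (use eta(1) in simp)
  then have "real K * \<epsilon> > 32 * L - \<epsilon>" by (simp add: algebra_simps)
  then show False using A L2 eps by linarith
qed

end
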